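(* Let $k\ge 2$ and let $W\in\mathcal W^2_{3\times(3k+1)}$ be such that each of its three rows contains exactly $2k+1$ filled cells (equivalently $e(W[1])=e(W[2])=e(W[3])=1/3$). Then the multiset of lengths of the maximal horizontal pillars of the middle row $W[2]$ is either $\{2,2,\dots,2,1\}$ ($k$ parts equal to $2$ and one part equal to $1$) or $\{3,2,\dots,2,1,1\}$ (one part $3$, $k-2$ parts $2$, and two parts $1$).
   Context: A 2-dimensional binary word of dimensions $h\times w$ is an $h\times w$ matrix with entries in $\{\square,\blacksquare\}$ (filled cells $\blacksquare$, empty cells $\square$); $|U|_\blacksquare$ is the number of filled cells of $U$. Two cells $(i,j),(i',j')$ are adjacent if $|i-i'|+|j-j'|=1$; the degree of a filled cell is the number of filled cells adjacent to it. $\mathcal W^2_{h\times w}$ is the set of $h\times w$ binary words in which every filled cell has degree at most $2$. $W[i]$ denotes row $i$ of $W$. The excess of an $a\times b$ word $U$ is $e(U)=|U|_\blacksquare-2ab/3$. A maximal horizontal pillar of a row is a maximal run of consecutive filled cells in that row. *)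

theory Defs
  imports Main "HOL-Library.Multiset"
begin

text \<open>An h x w binary word is modelled as a predicate W :: nat => nat => bool,
 where W i j (for i < h, j < w, 0-indexed) means cell (i,j) is filled.
 Values outside the grid are irrelevant.\<close>

definition cells :: "nat \<Rightarrow> nat \<Rightarrow> (nat \<times> nat) set" where
  "cells h w = {(i, j). i < h \<and> j < w}"

definition adjacent :: "nat \<times> nat \<Rightarrow> nat \<times> nat \<Rightarrow> bool" where
  "adjacent p q = (nat \<bar>int (fst p) - int (fst q)\<bar> + nat \<bar>int (snd p) - int (snd q)\<bar> = 1)"

definition degree :: "nat \<Rightarrow> nat \<Rightarrow> (nat \<Rightarrow> nat \<Rightarrow> bool) \<Rightarrow> nat \<times> nat \<Rightarrow> nat" where
  "degree h w W p = card {q \<in> cells h w. W (fst q) (snd q) \<and> adjacent p q}"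

definition W2 :: "nat \<Rightarrow> nat \<Rightarrow> (nat \<Rightarrow> nat \<Rightarrow> bool) \<Rightarrow> bool" where
  "W2 h w W = (\<forall>p \<in> cells h w. W (fst p) (snd p) \<longrightarrow> degree h w W p \<le> 2)"

definition row_count :: "nat \<Rightarrow> (nat \<Rightarrow> nat \<Rightarrow> bool) \<Rightarrow> nat \<Rightarrow> nat" where
  "row_count w W i = card {j. j < w \<and> W i j}"

definition pillars :: "nat \<Rightarrow> (nat \<Rightarrow> nat \<Rightarrow> bool) \<Rightarrow> nat \<Rightarrow> (nat \<times> nat) set" where
  "pillars w W i = {(a, b). a < b \<and> b \<le> w \<and> (\<forall>j. a \<le> j \<and> j < b \<longrightarrow> W i j)
      \<and> (a = 0 \<or> \<not> W i (a - 1)) \<and> (b = w \<or> \<not> W i b)}"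

definition pillar_lengths :: "nat \<Rightarrow> (nat \<Rightarrow> nat \<Rightarrow> bool) \<Rightarrow> nat \<Rightarrow> nat multiset" where
  "pillar_lengths w W i = image_mset (\<lambda>(a, b). b - a) (mset_set (pillars w W i))"

end

theory Submission
  imports Defs "HOL-Library.Multiset"
begin


lemma ms_ge2: "\<forall>x\<in>#N. (2::nat) \<le> x \<Longrightarrow> 2 * size N \<le> sum_mset N"
  by (induction N) auto

lemma ms_eq2: "\<forall>x\<in>#N. (2::nat) \<le> x \<Longrightarrow> sum_mset N = 2 * size N \<Longrightarrow> N = replicate_mset (size N) 2"
proof (induction N)
  case empty then show ?case by simp
next
  case (add x N)
  have N2: "\<forall>y\<in>#N. 2 \<le> y" and x2: "2 \<le> x" using add.prems(1) by simp_all
  have g: "2 * size N \<le> sum_mset N" using N2 by (rule ms_ge2)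
  have s: "x + sum_mset N = 2 * size N + 2" using add.prems(2) by simp
  have "x = 2" "sum_mset N = 2 * size N" using g s x2 by linarith+
  then have "N = replicate_mset (size N) 2" using add.IH N2 by blast
  then show ?case using \<open>x = 2\<close> by simp
qed

lemma ms_eq3: "\<forall>x\<in>#N. (2::nat) \<le> x \<Longrightarrow> sum_mset N = 2 * size N + 1 \<Longrightarrow> N = {#3#} + replicate_mset (size N - 1) 2"
proof (induction N)
  case empty then show ?case by simp
next
  case (add x N)
  have N2: "\<forall>y\<in>#N. 2 \<le> y" and x2: "2 \<le> x" using add.prems(1) by simp_all
  have g: "2 * size N \<le> sum_mset N" using N2 by (rule ms_ge2)
  have s: "x + sum_mset N = 2 * size N + 3" using add.prems(2) by simp
  have "x = 2 \<or> x = 3" using g s x2 by linarith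
  then show ?case
  proof
    assume "x = 2"
    then have s2: "sum_mset N = 2 * size N + 1" using s by linarith
    then have e: "N = {#3#} + replicate_mset (size N - 1) 2" using add.IH N2 by blast
    obtain s' where "size N = Suc s'" using s2 by (cases "size N") auto
    then have "size N - 1 = s'" by simp
    have N': "N = {#3#} + replicate_mset s' 2"
      by (subst e) (simp only: \<open>size N - 1 = s'\<close>)
    show ?case using \<open>x = 2\<close> by (simp add: N')
  next
    assume "x = 3"
    then have "sum_mset N = 2 * size N" using s by linarith
    then have e2: "N = replicate_mset (size N) 2" using N2 by (intro ms_eq2) auto
    show ?case by (subst e2) (simp add: \<open>x = 3\<close>)
  qed
qed
lemma ms_final:
  fixes M :: "nat multiset" and k :: nat
  assumes "\<forall>x\<in>#M. 1 \<le> x" "size M = k + 1" "sum_mset M = 2*k+1" "count M 1 \<le> 2" "k \<ge> 2"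
  shows "M = replicate_mset k 2 + {#1#} \<or> M = {#3#} + replicate_mset (k - 2) 2 + {#1, 1#}"
proof -
  define c where "c = count M 1"
  define N where "N = filter_mset (\<lambda>x. x \<noteq> 1) M"
  have M: "M = replicate_mset c 1 + N"
    unfolding c_def N_def by (metis filter_eq_replicate_mset multiset_partition)
  have N2: "\<forall>x\<in>#N. 2 \<le> x" using assms(1) unfolding N_def by fastforce
  have sz: "size N = k + 1 - c" "c \<le> k + 1" using assms(2) M by auto
  have sm: "sum_mset N + c = 2*k+1" using assms(3) M by auto
  have "2 * size N \<le> sum_mset N" using N2 by (rule ms_ge2)
  moreover have c2: "c \<le> 2" using assms(4) unfolding c_def .
  ultimately have "c = 1 \<or> c = 2" using sz sm by linarith
  then show ?thesis
  proof
    assume "c = 1"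
    hence "size N = k" "sum_mset N = 2 * size N" using sz sm by auto
    note e = ms_eq2[OF N2 this(2)]
    have "N = replicate_mset k 2" by (subst e) (simp only: \<open>size N = k\<close>)
    thus ?thesis using M \<open>c = 1\<close> by auto
  next
    assume "c = 2"
    hence "size N = k - 1" "sum_mset N = 2 * size N + 1" using sz sm assms(5) by auto
    note e = ms_eq3[OF N2 this(2)]
    have "size N - 1 = k - 2" using \<open>size N = k - 1\<close> by simp
    have "N = {#3#} + replicate_mset (k - 2) 2" by (subst e) (simp only: \<open>size N - 1 = k - 2\<close>)
    moreover have "replicate_mset c 1 = {#1::nat,1#}" using \<open>c = 2\<close> by (simp add: numeral_2_eq_2)
    ultimately have "M = {#1,1#} + ({#3#} + replicate_mset (k - 2) 2)" unfolding M by (simp only:)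
    hence "M = ({#3#} + replicate_mset (k - 2) 2) + {#1,1#}" by (rule trans[OF _ add.commute])
    thus ?thesis by (rule disjI2)
  qed
qed

lemma count_ident1:
  fixes x :: "nat \<Rightarrow> int"
  shows "(\<Sum>j<Suc n'. 2 + x j - x j * (if 0<j then x (j-1) else 0) - x j * (if j+1<Suc n' then x (j+1) else 0))
     = 2*int(Suc n') + (\<Sum>j<Suc n'. x j) - 2*(\<Sum>j<n'. x j * x (Suc j))"
proof -
  have L: "(\<Sum>j<Suc n'. x j * (if 0<j then x (j-1) else 0)) = (\<Sum>j<n'. x j * x (Suc j))"
    by (subst sum.lessThan_Suc_shift) (simp add: mult.commute)
  have R: "(\<Sum>j<Suc n'. x j * (if j+1<Suc n' then x (j+1) else 0)) = (\<Sum>j<n'. x j * x (Suc j))"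
    by (simp add: sum.lessThan_Suc)
  show ?thesis
    by (simp only: sum_subtractf sum.distrib L R) simp
qed

lemma count_ident2:
  fixes x :: "nat \<Rightarrow> int"
  shows "(\<Sum>j<n'. (1 - x j)*(1 - x (Suc j))) = int n' - ((\<Sum>j<Suc n'. x j) - x n') - ((\<Sum>j<Suc n'. x j) - x 0) + (\<Sum>j<n'. x j * x (Suc j))"
proof -
  have "(\<Sum>j<n'. (1 - x j)*(1 - x (Suc j))) = (\<Sum>j<n'. 1 - x j - x (Suc j) + x j * x (Suc j))"
    by (simp add: algebra_simps)
  also have "\<dots> = int n' - (\<Sum>j<n'. x j) - (\<Sum>j<n'. x (Suc j)) + (\<Sum>j<n'. x j * x (Suc j))"
    by (simp add: sum_subtractf sum.distrib)
  moreover have "(\<Sum>j<Suc n'. x j) = x 0 + (\<Sum>j<n'. x (Suc j))" by (rule sum.lessThan_Suc_shift)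
  moreover have "(\<Sum>j<Suc n'. x j) = (\<Sum>j<n'. x j) + x n'" by simp
  ultimately show ?thesis by linarith
qed


lemma fin_cells: "finite (cells h w)"
  by (rule finite_subset[of _ "{..<h} \<times> {..<w}"]) (auto simp: cells_def)

lemma three_nb:
  assumes "W2 h w W" "p \<in> cells h w" "W (fst p) (snd p)"
    "q1 \<in> cells h w" "q2 \<in> cells h w" "q3 \<in> cells h w"
    "W (fst q1) (snd q1)" "W (fst q2) (snd q2)" "W (fst q3) (snd q3)"
    "adjacent p q1" "adjacent p q2" "adjacent p q3"
    "q1 \<noteq> q2" "q1 \<noteq> q3" "q2 \<noteq> q3"
  shows False
proof -
  have "{q1,q2,q3} \<subseteq> {q \<in> cells h w. W (fst q) (snd q) \<and> adjacent p q}" using assms by auto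
  hence "card {q1,q2,q3} \<le> degree h w W p" unfolding degree_def
    by (intro card_mono) (use fin_cells in auto)
  moreover have "card {q1,q2,q3} = 3" using assms by auto
  moreover have "degree h w W p \<le> 2" using assms unfolding W2_def by auto
  ultimately show False by simp
qed

lemma three_nb':
  assumes "W2 h w W" "(i,j) \<in> cells h w" "W i j"
    "(i1,j1) \<in> cells h w" "(i2,j2) \<in> cells h w" "(i3,j3) \<in> cells h w"
    "W i1 j1" "W i2 j2" "W i3 j3"
    "adjacent (i,j) (i1,j1)" "adjacent (i,j) (i2,j2)" "adjacent (i,j) (i3,j3)"
    "(i1,j1) \<noteq> (i2,j2)" "(i1,j1) \<noteq> (i3,j3)" "(i2,j2) \<noteq> (i3,j3)"
  shows False
  by (rule three_nb[OF assms(1-2), of "(i1,j1)" "(i2,j2)" "(i3,j3)"]) (use assms in auto)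

lemma adj_facts:
  "adjacent (i, j) (Suc i, j)" "adjacent (Suc i, j) (i, j)"
  "adjacent (i, j) (i, Suc j)" "adjacent (i, Suc j) (i, j)"
  by (auto simp: adjacent_def)

lemma mid_bound:
  assumes "W2 3 n W" "j < n" "W 1 j"
  shows "of_bool (W 0 j) + of_bool (W 2 j) + (if 0<j then of_bool (W 1 (j-1)) else 0)
         + (if j+1<n then of_bool (W 1 (j+1)) else 0) \<le> (2::int)"
proof -
  have c: "(i, j') \<in> cells 3 n" if "i < 3" "j' < n" for i j' using that by (simp add: cells_def)
  have p: "(1, j) \<in> cells 3 n" using c assms by simp
  have A: "adjacent (1,j) (0,j)" "adjacent (1,j) (2,j)"
    using adj_facts[of 0 j] adj_facts[of 1 j] by (simp_all add: numeral_2_eq_2)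
  have L: "adjacent (1,j) (1,j-1)" if "0<j" using that adj_facts[of 1 "j-1"] by simp
  have R: "adjacent (1,j) (1,j+1)" using adj_facts[of 1 j] by simp
  have d: "j - 1 \<noteq> j + 1" by arith
  note T = three_nb'[OF assms(1) p assms(3)]
  have 1: "\<not> (W 0 j \<and> W 2 j \<and> 0 < j \<and> W 1 (j-1))"
    using T[of "0" "j" "2" "j" "1" "j-1"] A L c assms(2) by auto
  have 2: "\<not> (W 0 j \<and> W 2 j \<and> j+1<n \<and> W 1 (j+1))"
    using T[of "0" "j" "2" "j" "1" "j+1"] A R c assms(2) by auto
  have 3: "\<not> (W 0 j \<and> 0<j \<and> W 1 (j-1) \<and> j+1<n \<and> W 1 (j+1))"
    using T[of "0" "j" "1" "j-1" "1" "j+1"] A L R c d assms(2) by auto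
  have 4: "\<not> (W 2 j \<and> 0<j \<and> W 1 (j-1) \<and> j+1<n \<and> W 1 (j+1))"
    using T[of "2" "j" "1" "j-1" "1" "j+1"] A L R c d assms(2) by auto
  show ?thesis using 1 2 3 4 by (auto split: if_splits)
qed

lemma top_bound:
  assumes "W2 3 n W" "0 < a" "a + 1 < n" "W 0 a" "W 1 a" "W 0 (a-1)" "W 0 (a+1)"
  shows False
proof -
  have c: "(i, j') \<in> cells 3 n" if "i < 3" "j' < n" for i j' using that by (simp add: cells_def)
  have "adjacent (0,a) (1,a)" "adjacent (0,a) (0,a-1)" "adjacent (0,a) (0,a+1)"
    using adj_facts[of 0 a] adj_facts[of 0 "a-1"] assms(2) by auto
  moreover have "a - 1 \<noteq> a + 1" by arith
  ultimately show False
    using three_nb'[OF assms(1), of 0 a 1 a 0 "a-1" 0 "a+1"] c assms \<open>a - 1 \<noteq> a + 1\<close> by auto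
qed


lemma start_ex: fixes W :: "nat \<Rightarrow> nat \<Rightarrow> bool" and j :: nat shows "W i j \<Longrightarrow> \<exists>a\<le>j. (a = 0 \<or> \<not> W i (a-1)) \<and> (\<forall>l. a \<le> l \<and> l \<le> j \<longrightarrow> W i l)"
proof (induction j)
  case 0 then show ?case by auto
next
  case (Suc j)
  show ?case
  proof (cases "W i j")
    case True
    then obtain a where "a \<le> j" "a = 0 \<or> \<not> W i (a-1)" "\<forall>l. a \<le> l \<and> l \<le> j \<longrightarrow> W i l"
      using Suc.IH by blast
    then show ?thesis using Suc.prems by (intro exI[of _ a]) (auto simp: le_Suc_eq)
  next
    case False
    then show ?thesis using Suc.prems by (intro exI[of _ "Suc j"]) auto
  qed
qed

lemma end_ex_aux: fixes W :: "nat \<Rightarrow> nat \<Rightarrow> bool" and j n d :: nat shows "n - j = d \<Longrightarrow> j < n \<Longrightarrow> W i j \<Longrightarrow>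
   \<exists>b. j < b \<and> b \<le> n \<and> (b = n \<or> \<not> W i b) \<and> (\<forall>l. j \<le> l \<and> l < b \<longrightarrow> W i l)"
proof (induction d arbitrary: j)
  case 0 then show ?case by auto
next
  case (Suc d)
  show ?case
  proof (cases "Suc j < n \<and> W i (Suc j)")
    case True
    obtain b where "Suc j < b" "b \<le> n" "b = n \<or> \<not> W i b" "\<forall>l. Suc j \<le> l \<and> l < b \<longrightarrow> W i l"
    proof -
      have "n - Suc j = d" using Suc.prems by arith
      then show ?thesis using Suc.IH[of "Suc j"] True that by blast
    qed
    note bb = this
    have "\<forall>l. j \<le> l \<and> l < b \<longrightarrow> W i l"
    proof (intro allI impI)
      fix l assume "j \<le> l \<and> l < b"
      then show "W i l" using bb(4) Suc.prems by (cases "l = j") auto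
    qed
    then show ?thesis using bb by (intro exI[of _ b]) auto
  next
    case False
    then show ?thesis using Suc.prems by (intro exI[of _ "Suc j"]) (auto simp: Suc_le_eq; metis le_antisym less_Suc_eq_le)
  qed
qed

lemma pillar_ex:
  assumes "j < n" "W i j"
  shows "\<exists>a b. (a, b) \<in> pillars n W i \<and> a \<le> j \<and> j < b"
proof -
  obtain a where a: "a \<le> j" "a = 0 \<or> \<not> W i (a-1)" "\<forall>l. a \<le> l \<and> l \<le> j \<longrightarrow> W i l"
    using start_ex[of W i j] assms(2) by blast
  obtain b where b: "j < b" "b \<le> n" "b = n \<or> \<not> W i b" "\<forall>l. j \<le> l \<and> l < b \<longrightarrow> W i l"
    using end_ex_aux[of n j "n - j" W i] assms by blast
  have "\<forall>l. a \<le> l \<and> l < b \<longrightarrow> W i l"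
  proof (intro allI impI)
    fix l assume "a \<le> l \<and> l < b"
    then show "W i l" using a(3) b(4) by (cases "l \<le> j") auto
  qed
  then have "(a, b) \<in> pillars n W i"
    unfolding pillars_def using a b by auto
  then show ?thesis using a b by blast
qed

lemma pillar_fst_inj:
  assumes "(a, b) \<in> pillars n W i" "(a, b') \<in> pillars n W i"
  shows "b = b'"
proof (rule ccontr)
  assume "b \<noteq> b'"
  then consider "b < b'" | "b' < b" by linarith
  then show False
  proof cases
    case 1 then show False using assms unfolding pillars_def by auto
  next
    case 2 then show False using assms unfolding pillars_def by auto
  qed
qed

lemma pillar_snd_inj:
  assumes "(a, b) \<in> pillars n W i" "(a', b) \<in> pillars n W i"
  shows "a = a'"
proof (rule ccontr)
  assume "a \<noteq> a'"
  then consider "a < a'" | "a' < a" by linarith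
  then show False
  proof cases
    case 1
    have "a' < b" "\<forall>l. a \<le> l \<and> l < b \<longrightarrow> W i l" "\<not> W i (a' - 1)"
      using assms 1 unfolding pillars_def by auto
    moreover have "a \<le> a' - 1" "a' - 1 < b" using 1 \<open>a' < b\<close> by arith+
    ultimately show False by blast
  next
    case 2
    have "a < b" "\<forall>l. a' \<le> l \<and> l < b \<longrightarrow> W i l" "\<not> W i (a - 1)"
      using assms 2 unfolding pillars_def by auto
    moreover have "a' \<le> a - 1" "a - 1 < b" using 2 \<open>a < b\<close> by arith+
    ultimately show False by blast
  qed
qed

lemma pillars_finite: "finite (pillars n W i)"
  by (rule finite_subset[of _ "{..n} \<times> {..n}"]) (auto simp: pillars_def)

lemma sum_Suc_card: "finite A \<Longrightarrow> (\<Sum>e\<in>A. Suc e) = (\<Sum>e\<in>A. e) + card A"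
  by (induction A rule: finite_induct) auto

lemma struct_pillars:
  fixes W :: "nat \<Rightarrow> nat \<Rightarrow> bool"
  assumes n: "n = Suc n'" and h0: "W i 0" and hn: "W i n'"
    and ee: "\<forall>j. j < n' \<longrightarrow> W i j \<or> W i (Suc j)"
  defines "E \<equiv> {j. j < n \<and> \<not> W i j}"
  defines "P \<equiv> pillars n W i"
  shows "card P = Suc (card E)" "(\<Sum>p\<in>P. snd p - fst p) = n - card E"
proof -
  have finE: "finite E" unfolding E_def by auto
  have finP: "finite P" unfolding P_def by (rule pillars_finite)
  have injf: "inj_on fst P" unfolding P_def inj_on_def using pillar_fst_inj
    by (metis prod.collapse)
  have injs: "inj_on snd P" unfolding P_def inj_on_def using pillar_snd_inj
    by (metis prod.collapse)
  have F: "fst ` P = insert 0 (Suc ` E)"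
  proof (intro equalityI subsetI)
    fix a assume "a \<in> fst ` P"
    then obtain b where ab: "(a, b) \<in> pillars n W i" unfolding P_def by force
    then have "a = 0 \<or> (a - 1 \<in> E \<and> a = Suc (a - 1))" unfolding pillars_def E_def by auto
    then show "a \<in> insert 0 (Suc ` E)" by (metis image_eqI insertCI)
  next
    fix a assume a: "a \<in> insert 0 (Suc ` E)"
    show "a \<in> fst ` P"
    proof (cases "a = 0")
      case True
      obtain a' b where "(a', b) \<in> P" "a' \<le> 0" using pillar_ex[of 0 n W i] h0 n unfolding P_def by auto
      then show ?thesis using True by force
    next
      case False
      then obtain e where e: "e \<in> E" "a = Suc e" using a by auto
      have "e \<noteq> n'" using e hn unfolding E_def by auto
      then have "e < n'" using e n unfolding E_def by auto
      then have "W i (Suc e)" using ee e unfolding E_def by auto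
      then obtain a' b where ab: "(a', b) \<in> P" "a' \<le> Suc e" "Suc e < b"
        using pillar_ex[of "Suc e" n W i] \<open>e < n'\<close> n unfolding P_def by auto
      have "a' = Suc e"
      proof (rule ccontr)
        assume "a' \<noteq> Suc e"
        then have "a' \<le> e" using ab by auto
        then have "W i e" using ab unfolding P_def pillars_def by auto
        then show False using e unfolding E_def by auto
      qed
      then show ?thesis using ab e by force
    qed
  qed
  have S: "snd ` P = insert n E"
  proof (intro equalityI subsetI)
    fix b assume "b \<in> snd ` P"
    then obtain a where ab: "(a, b) \<in> pillars n W i" unfolding P_def by force
    then show "b \<in> insert n E" unfolding pillars_def E_def by auto
  next
    fix b assume b: "b \<in> insert n E"
    show "b \<in> snd ` P"
    proof (cases "b = n")
      case True
      obtain a b' where "(a, b') \<in> P" "n' < b'" using pillar_ex[of n' n W i] hn n unfolding P_def by auto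
      moreover then have "b' \<le> n" unfolding P_def pillars_def by auto
      ultimately show ?thesis using True n by force
    next
      case False
      then have e: "b \<in> E" using b by auto
      have "b \<noteq> 0" using e h0 unfolding E_def by (cases b) auto
      then have "b - 1 < n'" using e n unfolding E_def by auto
      then have "W i (b - 1)" using ee[rule_format, of "b - 1"] e \<open>b \<noteq> 0\<close> unfolding E_def by auto
      then obtain a b' where ab: "(a, b') \<in> P" "a \<le> b - 1" "b - 1 < b'"
        using pillar_ex[of "b - 1" n W i] \<open>b - 1 < n'\<close> n unfolding P_def by auto
      have "b' = b"
      proof (rule ccontr)
        assume "b' \<noteq> b"
        then have "b < b'" using ab by auto
        then have "W i b" using ab unfolding P_def pillars_def by auto
        then show False using e unfolding E_def by auto
      qed
      then show ?thesis using ab by force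
    qed
  qed
  have "card P = card (fst ` P)" using card_image[OF injf] by simp
  also have "\<dots> = Suc (card E)" unfolding F using finE
    by (simp add: card_image)
  finally show "card P = Suc (card E)" .
  have lt: "fst p \<le> snd p" if "p \<in> P" for p using that unfolding P_def pillars_def by auto
  have "(\<Sum>p\<in>P. snd p - fst p) = (\<Sum>p\<in>P. snd p) - (\<Sum>p\<in>P. fst p)"
    by (rule sum_subtractf_nat) (use lt in auto)
  also have "(\<Sum>p\<in>P. snd p) = (\<Sum>b\<in>snd ` P. b)" using sum.reindex[OF injs, of id] by simp
  also have "\<dots> = n + (\<Sum>b\<in>E. b)" unfolding S using finE by (simp add: E_def)
  also have "(\<Sum>p\<in>P. fst p) = (\<Sum>a\<in>fst ` P. a)" using sum.reindex[OF injf, of id] by simp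
  also have "\<dots> = (\<Sum>e\<in>E. Suc e)" unfolding F using finE by (simp add: sum.reindex)
  also have "\<dots> = (\<Sum>e\<in>E. e) + card E" using sum_Suc_card[OF finE] .
  finally show "(\<Sum>p\<in>P. snd p - fst p) = n - card E" by simp
qed


lemma cnt: fixes n :: nat shows "int (card {j. j < n \<and> P j}) = (\<Sum>j<n. of_bool (P j))"
proof -
  have "{j. j < n \<and> P j} = {j \<in> {..<n}. P j}" by auto
  then have "card {j. j < n \<and> P j} = (\<Sum>j\<in>{j \<in> {..<n}. P j}. 1)" by simp
  also have "\<dots> = (\<Sum>j<n. if P j then 1 else 0)" by (rule sum.inter_filter) simp
  finally have "int (card {j. j < n \<and> P j}) = int (\<Sum>j<n. if P j then 1 else 0)" by simp
  also have "\<dots> = (\<Sum>j<n. int (if P j then 1 else 0))" by (rule of_nat_sum)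
  also have "\<dots> = (\<Sum>j<n. of_bool (P j))" by (rule sum.cong) auto
  finally show ?thesis .
qed

theorem mainTheorem12:
  fixes k :: nat and W :: "nat \<Rightarrow> nat \<Rightarrow> bool"
  assumes "k \<ge> 2"
    and "W2 3 (3 * k + 1) W"
    and "\<forall>i < 3. row_count (3 * k + 1) W i = 2 * k + 1"
  shows "pillar_lengths (3 * k + 1) W 1 = replicate_mset k 2 + {#1#}
       \<or> pillar_lengths (3 * k + 1) W 1 = {#3#} + replicate_mset (k - 2) 2 + {#1, 1#}"
proof -
  define n where "n = 3 * k + 1"
  define n' where "n' = 3 * k"
  have nn: "n = Suc n'" unfolding n_def n'_def by simp
  have W2: "W2 3 n W" using assms(2) unfolding n_def .
  define x where "x j = (of_bool (W 1 j) :: int)" for j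
  define c where "c j = (of_bool (W 0 j) + of_bool (W 1 j) + of_bool (W 2 j) :: int)" for j
  define B where "B j = 2 + x j - x j * (if 0<j then x (j-1) else 0) - x j * (if j+1<n then x (j+1) else 0)" for j
  have rc: "(\<Sum>j<n. of_bool (W i j)) = (2 * int k + 1 :: int)" if "i < 3" for i
    using assms(3) that cnt[of n "W i"] unfolding row_count_def n_def by simp
  have X: "(\<Sum>j<n. x j) = 2 * int k + 1" using rc[of 1] unfolding x_def by simp
  have sumc: "(\<Sum>j<n. c j) = 6 * int k + 3"
    using rc[of 0] rc[of 1] rc[of 2] unfolding c_def by (simp add: sum.distrib)
  have cB: "c j \<le> B j" if "j < n" for j
  proof (cases "W 1 j")
    case True
    then show ?thesis using mid_bound[OF W2 that True] unfolding c_def B_def x_def by auto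
  next
    case False
    then show ?thesis unfolding c_def B_def x_def by auto
  qed
  have sumB: "(\<Sum>j<n. B j) = 2*int n + (\<Sum>j<n. x j) - 2*(\<Sum>j<n'. x j * x (Suc j))"
    unfolding B_def nn by (rule count_ident1)
  note EE = count_ident2[of x n']
  have EE': "(\<Sum>j<n'. (1 - x j)*(1 - x (Suc j))) = int n' - ((\<Sum>j<n. x j) - x n') - ((\<Sum>j<n. x j) - x 0) + (\<Sum>j<n'. x j * x (Suc j))"
    using EE unfolding nn[symmetric] .
  have nint: "int n = 3 * int k + 1" "int n' = 3 * int k" unfolding n_def n'_def by simp_all
  have le: "(\<Sum>j<n. c j) \<le> (\<Sum>j<n. B j)" by (rule sum_mono) (use cB in auto)
  have ineq: "(\<Sum>j<n'. (1 - x j)*(1 - x (Suc j))) + (1 - x 0) + (1 - x n') \<le> 0"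
    using le sumc sumB EE' X nint by linarith
  have x01: "x j = 0 \<or> x j = 1" for j unfolding x_def by simp
  have nonneg: "0 \<le> (1 - x j)*(1 - x (Suc j))" for j using x01[of j] x01[of "Suc j"] by auto
  have "0 \<le> (\<Sum>j<n'. (1 - x j)*(1 - x (Suc j)))" by (rule sum_nonneg) (use nonneg in auto)
  moreover have "0 \<le> 1 - x 0" "0 \<le> 1 - x n'" using x01[of 0] x01[of n'] by auto
  ultimately have z: "(\<Sum>j<n'. (1 - x j)*(1 - x (Suc j))) = 0" "x 0 = 1" "x n' = 1"
    using ineq by linarith+
  have m0: "W 1 0" and mn: "W 1 n'" using z unfolding x_def by auto
  have noEE: "\<forall>j. j < n' \<longrightarrow> W 1 j \<or> W 1 (Suc j)"
  proof (intro allI impI)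
    fix j assume "j < n'"
    then have "(1 - x j)*(1 - x (Suc j)) = 0"
      using z(1) sum_nonneg_eq_0_iff[of "{..<n'}" "\<lambda>j. (1 - x j)*(1 - x (Suc j))"] nonneg by auto
    then show "W 1 j \<or> W 1 (Suc j)" unfolding x_def by auto
  qed
  have "(\<Sum>j<n. B j) = 6 * int k + 3"
    using sumB EE' X z nint by linarith
  have tight: "c j = B j" if "j < n" for j
  proof (rule ccontr)
    assume "c j \<noteq> B j"
    then have "c j < B j" using cB[OF that] by auto
    then have "(\<Sum>j<n. c j) < (\<Sum>j<n. B j)"
      by (intro sum_strict_mono_ex1) (use cB that in auto)
    then show False using sumc \<open>(\<Sum>j<n. B j) = 6 * int k + 3\<close> by simp
  qed
  have S3: False if a: "0 < a" "a + 1 < n" "\<not> W 1 (a-1)" "\<not> W 1 (a+1)" "W 1 a" for a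
  proof -
    have "c (a-1) = 2" using tight[of "a-1"] a unfolding B_def x_def by simp
    then have t1: "W 0 (a-1)" unfolding c_def using a by (auto simp: of_bool_def split: if_splits)
    have "c (a+1) = 2" using tight[of "a+1"] a unfolding B_def x_def by simp
    then have t2: "W 0 (a+1)" unfolding c_def using a by (auto simp: of_bool_def split: if_splits)
    have "c a = 3" using tight[of a] a unfolding B_def x_def by simp
    then have t0: "W 0 a" unfolding c_def using a by (auto simp: of_bool_def split: if_splits)
    show False using top_bound[OF W2 a(1,2) t0 a(5) t1 t2] .
  qed
  define E where "E = {j. j < n \<and> \<not> W 1 j}"
  define P where "P = pillars n W 1"
  have cardE: "card E = k"
  proof -
    have "int (card E) = (\<Sum>j<n. of_bool (\<not> W 1 j))" unfolding E_def by (rule cnt)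
    also have "\<dots> = (\<Sum>j<n. 1 - x j)" unfolding x_def by (intro sum.cong) auto
    also have "\<dots> = int n - (2 * int k + 1)" using X by (simp add: sum_subtractf)
    finally show ?thesis unfolding n_def by simp
  qed
  have SP: "card P = Suc (card E)" "(\<Sum>p\<in>P. snd p - fst p) = n - card E"
    using struct_pillars[of n n' W 1, OF nn m0 mn noEE] unfolding E_def P_def by auto
  define f where "f = (\<lambda>(a::nat, b::nat). b - a)"
  define M where "M = image_mset f (mset_set P)"
  have finP: "finite P" unfolding P_def by (rule pillars_finite)
  have PL: "pillar_lengths (3 * k + 1) W 1 = M" unfolding M_def f_def P_def pillar_lengths_def n_def by simp
  have size: "size M = k + 1" unfolding M_def using SP cardE by simp
  have "sum_mset M = (\<Sum>p\<in>P. f p)" unfolding M_def by (simp add: sum_unfold_sum_mset)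
  also have "\<dots> = (\<Sum>p\<in>P. snd p - fst p)" unfolding f_def by (simp add: split_beta)
  finally have sm: "sum_mset M = 2 * k + 1" using SP cardE unfolding n_def by simp
  have ge1: "\<forall>y\<in>#M. 1 \<le> y" unfolding M_def f_def using finP
    by (auto simp: P_def pillars_def)
  have "count M 1 = size (filter_mset (\<lambda>y. y = 1) M)" by (rule count_conv_size_mset)
  also have "\<dots> = card {p \<in> P. f p = 1}"
    unfolding M_def filter_mset_image_mset filter_mset_mset_set[OF finP] by simp
  also have "\<dots> \<le> card {(0::nat, 1::nat), (n', n)}"
  proof (rule card_mono)
    show "{p \<in> P. f p = 1} \<subseteq> {(0, 1), (n', n)}"
    proof
      fix p assume p: "p \<in> {p \<in> P. f p = 1}"
      obtain a b where ab: "p = (a, b)" by fastforce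
      have pl: "(a, b) \<in> pillars n W 1" "b = a + 1" using p ab unfolding P_def f_def by auto
      have "a = 0 \<or> a + 1 = n"
      proof (rule ccontr)
        assume "\<not> (a = 0 \<or> a + 1 = n)"
        then have "0 < a" "a + 1 < n" using pl unfolding pillars_def by auto
        moreover have "\<not> W 1 (a - 1)" "\<not> W 1 (a + 1)" "W 1 a"
          using pl \<open>0 < a\<close> \<open>a + 1 < n\<close> unfolding pillars_def by auto
        ultimately show False using S3 by blast
      qed
      then show "p \<in> {(0, 1), (n', n)}" using ab pl nn by auto
    qed
  qed simp
  also have "\<dots> \<le> 2" by (rule card_insert_le_m1) auto
  finally have c1: "count M 1 \<le> 2" .
  show ?thesis unfolding PL by (rule ms_final[OF ge1 size sm c1 assms(1)])
qed

end
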